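(* Let $X_1,\dots,X_n$ be independent random variables with $X_i\sim\mathsf{Gam}(\alpha_i,\beta_i)$ (shape $\alpha_i>0$, rate $\beta_i>0$), let $S_n=\sum_{i=1}^nX_i$, $\mu_n=\mathbb E[S_n]$, $\sigma_n^2=\mathrm{Var}[S_n]$, and let $Z\sim\mathsf N(\mu_n,\sigma_n^2)$ and $G\sim\mathsf{Gam}(\alpha,\beta)$ with $\alpha/\beta=\mu_n$ and $\alpha/\beta^2=\sigma_n^2$. Then $\mathbb E[Z^j]=\mathbb E[G^j]=\mathbb E[S_n^j]$ for $j=1,2$, and for every integer $j\ge3$, \[ \mathbb E[Z^j]<\mathbb E[G^j]\le\mathbb E[S_n^j]. \]
   Context: $\mathsf{Gam}(a,b)$ denotes the gamma distribution with shape $a$ and rate $b$ (density $b^a x^{a-1}e^{-bx}/\Gamma(a)$). *)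

theory Defs
  imports "HOL-Probability.Probability"
begin

definition gamma_density :: "real \<Rightarrow> real \<Rightarrow> real \<Rightarrow> real" where
  "gamma_density a b x =
     (if x > 0 then b powr a * x powr (a - 1) * exp (- b * x) / Gamma a else 0)"

end

theory Submission imports Defs "HOL-Computational_Algebra.Formal_Power_Series" begin

definition crec :: "(nat \<Rightarrow> real) \<Rightarrow> (nat \<Rightarrow> real) \<Rightarrow> bool" where
  "crec m k \<longleftrightarrow> m 0 = 1 \<and> (\<forall>j. m (Suc j) = (\<Sum>i\<le>j. real (j choose i) * k i * m (j - i)))"

definition egf :: "(nat \<Rightarrow> real) \<Rightarrow> real fps" where
  "egf m = Abs_fps (\<lambda>j. m j / fact j)"

definition bconv :: "(nat \<Rightarrow> real) \<Rightarrow> (nat \<Rightarrow> real) \<Rightarrow> nat \<Rightarrow> real" where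
  "bconv m1 m2 j = (\<Sum>i\<le>j. real (j choose i) * m1 i * m2 (j - i))"

lemma egf_mult_nth: "fps_nth (egf m1 * egf m2) j = bconv m1 m2 j / fact j"
proof -
  have "fps_nth (egf m1 * egf m2) j = (\<Sum>i=0..j. m1 i / fact i * (m2 (j - i) / fact (j - i)))"
    by (simp add: fps_mult_nth egf_def)
  also have "\<dots> = (\<Sum>i\<le>j. real (j choose i) * m1 i * m2 (j - i) / fact j)"
    by (auto simp: atLeast0AtMost binomial_fact intro!: sum.cong)
  finally show ?thesis by (simp add: bconv_def sum_divide_distrib)
qed

lemma egf_bconv: "egf (bconv m1 m2) = egf m1 * egf m2"
  by (rule fps_ext) (simp add: egf_mult_nth[unfolded egf_def] egf_def)

lemma egf_add: "egf (\<lambda>i. k1 i + k2 i) = egf k1 + egf k2"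
  by (rule fps_ext) (simp add: egf_def add_divide_distrib)

lemma crec_egf: "crec m k \<longleftrightarrow> m 0 = 1 \<and> fps_deriv (egf m) = egf k * egf m"
proof -
  have "fps_nth (fps_deriv (egf m)) j = m (Suc j) / fact j" for j
    by (simp add: egf_def fps_deriv_nth field_simps del: of_nat_Suc)
  then have "fps_deriv (egf m) = egf k * egf m \<longleftrightarrow> (\<forall>j. m (Suc j) / fact j = bconv k m j / fact j)"
    by (auto simp: fps_eq_iff egf_mult_nth)
  also have "\<dots> \<longleftrightarrow> (\<forall>j. m (Suc j) = bconv k m j)"
    by (auto simp: divide_cancel_right)
  finally show ?thesis unfolding crec_def bconv_def by auto
qed

lemma crec_bconv:
  assumes "crec m1 k1" "crec m2 k2"
  shows "crec (bconv m1 m2) (\<lambda>i. k1 i + k2 i)"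
proof -
  have "bconv m1 m2 0 = 1" using assms by (simp add: bconv_def crec_def)
  moreover have "fps_deriv (egf (bconv m1 m2)) = egf (\<lambda>i. k1 i + k2 i) * egf (bconv m1 m2)"
    using assms unfolding crec_egf egf_bconv egf_add
    by (simp add: fps_deriv_mult algebra_simps)
  ultimately show ?thesis by (simp add: crec_egf)
qed

lemma crec_const: "crec (\<lambda>j. c ^ j) (\<lambda>i. if i = 0 then c else 0)"
  unfolding crec_def
proof (intro conjI allI)
  fix j
  have "(\<Sum>i\<le>j. real (j choose i) * (if i = 0 then c else 0) * c ^ (j - i)) =
        (\<Sum>i\<in>{0}. real (j choose i) * (if i = 0 then c else 0) * c ^ (j - i))"
    by (rule sum.mono_neutral_right) auto
  then show "c ^ Suc j = (\<Sum>i\<le>j. real (j choose i) * (if i = 0 then c else 0) * c ^ (j - i))"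
    by simp
qed simp

lemma poch_sum: "(\<Sum>i\<le>j. (fact j / fact i) * pochhammer (a::real) i) = pochhammer (a + 1) j"
proof (induction j)
  case 0 then show ?case by simp
next
  case (Suc j)
  have "(\<Sum>i\<le>Suc j. (fact (Suc j) / fact i) * pochhammer a i) =
        (Suc j) * (\<Sum>i\<le>j. (fact j / fact i) * pochhammer a i) + pochhammer a (Suc j)"
    by (simp add: sum_distrib_left field_simps del: of_nat_Suc)
  also have "\<dots> = (a + 1 + j) * pochhammer (a + 1) j"
    using Suc by (simp add: pochhammer_rec algebra_simps)
  finally show ?case by (simp add: pochhammer_rec' add_ac)
qed

lemma crec_gamma:
  assumes "b \<noteq> 0"
  shows "crec (\<lambda>j. pochhammer a j / b ^ j) (\<lambda>i. a * fact i / b ^ Suc i)"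
  unfolding crec_def
proof (intro conjI allI)
  fix j
  have "(\<Sum>i\<le>j. real (j choose i) * (a * fact i / b ^ Suc i) * (pochhammer a (j - i) / b ^ (j - i)))
      = (\<Sum>i\<le>j. a / b ^ Suc j * ((fact j / fact (j - i)) * pochhammer a (j - i)))"
    using assms by (intro sum.cong refl) (auto simp: binomial_fact field_simps power_add[symmetric])
  also have "\<dots> = a / b ^ Suc j * (\<Sum>i\<le>j. (fact j / fact (j - i)) * pochhammer a (j - i))"
    by (simp add: sum_distrib_left)
  also have "(\<Sum>i\<le>j. (fact j / fact (j - i)) * pochhammer a (j - i)) = (\<Sum>i\<le>j. (fact j / fact i) * pochhammer a i)"
    using sum.atLeastAtMost_rev[of "\<lambda>i. (fact j / fact i) * pochhammer a i" 0 j, symmetric]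
    by (simp add: atMost_atLeast0)
  also have "\<dots> = pochhammer (a + 1) j" by (rule poch_sum)
  finally show "pochhammer a (Suc j) / b ^ Suc j =
     (\<Sum>i\<le>j. real (j choose i) * (a * fact i / b ^ Suc i) * (pochhammer a (j - i) / b ^ (j - i)))"
    by (simp add: pochhammer_rec)
qed simp


lemma crec_mono:
  assumes m: "crec m k" and m': "crec m' k'" and k0: "\<And>i. 0 \<le> k i" and kk: "\<And>i. k i \<le> k' i"
  shows "0 \<le> m j \<and> m j \<le> m' j"
proof (induction j rule: less_induct)
  case (less j)
  show ?case
  proof (cases j)
    case 0 then show ?thesis using m m' by (simp add: crec_def)
  next
    case (Suc j')
    have IH: "0 \<le> m (j' - i) \<and> m (j' - i) \<le> m' (j' - i)" for i
      using less Suc by auto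
    have t: "0 \<le> real (j' choose i) * k i * m (j' - i) \<and>
             real (j' choose i) * k i * m (j' - i) \<le> real (j' choose i) * k' i * m' (j' - i)" for i
      using IH[of i] k0[of i] kk[of i]
      by (auto intro!: mult_mono mult_nonneg_nonneg)
    have "m j = (\<Sum>i\<le>j'. real (j' choose i) * k i * m (j' - i))"
      using m Suc by (simp add: crec_def)
    moreover have "m' j = (\<Sum>i\<le>j'. real (j' choose i) * k' i * m' (j' - i))"
      using m' Suc by (simp add: crec_def)
    ultimately show ?thesis using t by (auto intro!: sum_nonneg sum_mono)
  qed
qed

lemma crec_pos:
  assumes m: "crec m k" and k0: "\<And>i. 0 \<le> k i" and kp: "k 0 > 0"
  shows "m j > 0"
proof (induction j)
  case 0 then show ?case using m by (simp add: crec_def)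
next
  case (Suc j)
  have nn: "0 \<le> real (j choose i) * k i * m (j - i)" for i
    using crec_mono[OF m m k0 order_refl, of "j - i"] k0[of i] by auto
  have "0 < real (j choose 0) * k 0 * m (j - 0)" using Suc kp by simp
  also have "\<dots> \<le> (\<Sum>i\<le>j. real (j choose i) * k i * m (j - i))"
    by (rule member_le_sum) (use nn in auto)
  finally show ?case using m by (simp add: crec_def)
qed

lemma crec_strict:
  assumes m: "crec m k" and m': "crec m' k'" and k0: "\<And>i. 0 \<le> k i" and kk: "\<And>i. k i \<le> k' i"
    and k2: "k 2 < k' 2" and kp: "k' 0 > 0" and j: "3 \<le> j"
  shows "m j < m' j"
proof -
  obtain j' where j': "j = Suc j'" "2 \<le> j'" using j by (cases j) auto
  have k0': "0 \<le> k' i" for i using k0[of i] kk[of i] by simp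
  have IH: "0 \<le> m (j' - i) \<and> m (j' - i) \<le> m' (j' - i)" for i
    using crec_mono[OF m m' k0 kk] by auto
  have t: "real (j' choose i) * k i * m (j' - i) \<le> real (j' choose i) * k' i * m' (j' - i)" for i
    using IH[of i] k0[of i] kk[of i]
    by (auto intro!: mult_mono mult_nonneg_nonneg)
  have pos: "m' (j' - 2) > 0" by (rule crec_pos[OF m' k0' kp])
  have c: "real (j' choose 2) > 0" using j' by simp
  have "k 2 * m (j' - 2) \<le> k 2 * m' (j' - 2)" using IH[of 2] k0[of 2] by (simp add: mult_left_mono)
  also have "\<dots> < k' 2 * m' (j' - 2)" using pos k2 by simp
  finally have "real (j' choose 2) * k 2 * m (j' - 2) < real (j' choose 2) * k' 2 * m' (j' - 2)"
    using c by (simp add: mult.assoc)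
  then have "(\<Sum>i\<le>j'. real (j' choose i) * k i * m (j' - i)) < (\<Sum>i\<le>j'. real (j' choose i) * k' i * m' (j' - i))"
    using j' t by (intro sum_strict_mono_ex1) auto
  then show ?thesis using m m' j' by (simp add: crec_def)
qed

definition cnorm :: "real \<Rightarrow> nat \<Rightarrow> real" where
  "cnorm s2 j = (if even j then fact j / ((2 / s2) ^ (j div 2) * fact (j div 2)) else 0)"

lemma crec_cnorm:
  assumes "s2 > 0"
  shows "crec (cnorm s2) (\<lambda>i. if i = 1 then s2 else 0)"
  unfolding crec_def
proof (intro conjI allI)
  fix j
  have "(\<Sum>i\<le>j. real (j choose i) * (if i = 1 then s2 else 0) * cnorm s2 (j - i)) =
        (\<Sum>i\<le>j. (if i = 1 then real (j choose 1) * s2 * cnorm s2 (j - 1) else 0))"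
    by (intro sum.cong) auto
  also have "\<dots> = real j * s2 * cnorm s2 (j - 1)"
    by (cases j) (auto simp: sum.delta)
  finally have eq: "(\<Sum>i\<le>j. real (j choose i) * (if i = 1 then s2 else 0) * cnorm s2 (j - i)) =
     real j * s2 * cnorm s2 (j - 1)" .
  show "cnorm s2 (Suc j) = (\<Sum>i\<le>j. real (j choose i) * (if i = 1 then s2 else 0) * cnorm s2 (j - i))"
  proof (cases "even j")
    case True
    then show ?thesis unfolding eq by (cases j) (auto simp: cnorm_def)
  next
    case False
    then obtain k where k: "j = 2 * k + 1" using oddE by blast
    have e: "Suc j = 2 * (k + 1)" "j - 1 = 2 * k" using k by auto
    have f1: "(fact (2 * (k + 1)) :: real) = (2 * real k + 2) * (2 * real k + 1) * fact (2 * k)"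
      by (simp add: algebra_simps)
    have f2: "(fact (k + 1) :: real) = (real k + 1) * fact k" by (simp add: algebra_simps)
    have "cnorm s2 (Suc j) = fact (2 * (k + 1)) / ((2 / s2) ^ (k + 1) * fact (k + 1))"
      unfolding e by (simp add: cnorm_def)
    also have "\<dots> = real j * s2 * (fact (2 * k) / ((2 / s2) ^ k * fact k))"
    proof -
      have x: "(2 / s2) ^ k > 0" "fact k > (0::real)" "real k + 1 > 0" using assms by auto
      have aux0: "\<And>(m::real) x f F s. x > 0 \<Longrightarrow> f > 0 \<Longrightarrow> s > 0 \<Longrightarrow> m > 0 \<Longrightarrow>
        (2 * m) * (2 * m - 1) * F / (x * (2 / s) * (m * f)) = (2 * m - 1) * s * (F / (x * f))"
        by (simp add: field_simps)
      have aux: "\<And>(n::real) x f F s. x > 0 \<Longrightarrow> f > 0 \<Longrightarrow> s > 0 \<Longrightarrow> n + 1 > 0 \<Longrightarrow>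
        (2 * n + 2) * (2 * n + 1) * F / (x * (2 / s) * ((n + 1) * f)) = (2 * n + 1) * s * (F / (x * f))"
        subgoal for n x f F s using aux0[of x f s "n + 1" F] by (simp add: algebra_simps)
        done
      have jj: "real j = 2 * real k + 1" using k by simp
      show ?thesis unfolding f1 f2 power_add power_one_right jj
        by (rule aux) (use x assms in auto)
    qed
    also have "\<dots> = real j * s2 * cnorm s2 (j - 1)"
      unfolding e by (simp add: cnorm_def)
    finally show ?thesis unfolding eq .
  qed
qed (simp add: cnorm_def)

lemma cum_ineq:
  fixes a b :: "nat \<Rightarrow> real"
  assumes I: "finite I" and ab: "\<And>i. i \<in> I \<Longrightarrow> a i > 0 \<and> b i > 0"
    and \<alpha>: "\<alpha> > 0" and \<beta>: "\<beta> > 0"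
    and A: "\<alpha> / \<beta> = (\<Sum>i\<in>I. a i / b i)" and B: "\<alpha> / \<beta>\<^sup>2 = (\<Sum>i\<in>I. a i / (b i)\<^sup>2)"
  shows "\<alpha> * fact k / \<beta> ^ Suc k \<le> (\<Sum>i\<in>I. a i * fact k / b i ^ Suc k)"
proof -
  define Av where "Av = \<alpha> / \<beta>"
  have Av: "Av > 0" using \<alpha> \<beta> by (simp add: Av_def)
  have ne: "I \<noteq> {}" using A Av by (auto simp: Av_def)
  define p where "p i = a i / b i / Av" for i
  have "(\<Sum>i\<in>I. p i) = (\<Sum>i\<in>I. a i / b i) / Av" by (simp add: p_def sum_divide_distrib)
  then have p1: "(\<Sum>i\<in>I. p i) = 1" using A Av by (simp add: Av_def)
  have pnn: "p i \<ge> 0" if "i \<in> I" for i using ab[OF that] Av by (simp add: p_def)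
  have cvx: "convex_on {0..} (\<lambda>x::real. x ^ k)"
  proof (cases "even k")
    case True then show ?thesis
      using convex_on_subset[OF convex_power_even[OF True], of "{0..}"] by simp
  next
    case False then show ?thesis by (rule convex_power_odd)
  qed
  have J: "(\<Sum>i\<in>I. p i *\<^sub>R (1 / b i)) ^ k \<le> (\<Sum>i\<in>I. p i * (1 / b i) ^ k)"
    using convex_on_sum[OF I ne cvx p1, of "\<lambda>i. 1 / b i"] pnn ab by (auto simp: less_imp_le)
  have L: "(\<Sum>i\<in>I. p i *\<^sub>R (1 / b i)) = 1 / \<beta>"
  proof -
    have "(\<Sum>i\<in>I. p i *\<^sub>R (1 / b i)) = (\<Sum>i\<in>I. a i / (b i)\<^sup>2) / Av"
      by (simp add: p_def sum_divide_distrib power2_eq_square mult_ac)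
    also have "\<dots> = 1 / \<beta>" using B \<alpha> \<beta> divide_pos_pos[OF \<alpha>, of "\<beta>\<^sup>2"] by (simp add: Av_def power2_eq_square field_simps)
    finally show ?thesis .
  qed
  have R: "(\<Sum>i\<in>I. p i * (1 / b i) ^ k) = (\<Sum>i\<in>I. a i / b i ^ Suc k) / Av"
    by (simp add: p_def sum_divide_distrib power_one_over field_simps)
  have "\<alpha> / \<beta> ^ Suc k = Av * (1 / \<beta>) ^ k" using \<beta> by (simp add: Av_def power_one_over field_simps)
  also have "\<dots> \<le> Av * ((\<Sum>i\<in>I. a i / b i ^ Suc k) / Av)"
    using J L R Av by (intro mult_left_mono) auto
  also have "\<dots> = (\<Sum>i\<in>I. a i / b i ^ Suc k)" using Av by simp
  finally have "\<alpha> / \<beta> ^ Suc k \<le> (\<Sum>i\<in>I. a i / b i ^ Suc k)" .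
  then have "fact k * (\<alpha> / \<beta> ^ Suc k) \<le> fact k * (\<Sum>i\<in>I. a i / b i ^ Suc k)"
    by (intro mult_left_mono) auto
  then show ?thesis by (simp add: sum_distrib_left field_simps)
qed

lemma gamma_density_nonneg: "a > 0 \<Longrightarrow> 0 \<le> gamma_density a b x"
  unfolding gamma_density_def by (auto intro!: divide_nonneg_pos mult_nonneg_nonneg Gamma_real_pos)

lemma Gamma_hbi:
  assumes "s > (0::real)"
  shows "has_bochner_integral lborel (\<lambda>t. indicator {0..} t * t powr (s - 1) / exp t) (Gamma s)"
proof (rule has_bochner_integral_nn_integral)
  show "(\<lambda>t. indicator {0..} t * t powr (s - 1) / exp t) \<in> borel_measurable lborel" by measurable
  show "AE x in lborel. 0 \<le> indicator {0..} x * x powr (s - 1) / exp x"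
    by (auto simp: indicator_def)
  show "0 \<le> Gamma s" using assms by (simp add: Gamma_real_pos less_imp_le)
  show "(\<integral>\<^sup>+ x. ennreal (indicator {0..} x * x powr (s - 1) / exp x) \<partial>lborel) = ennreal (Gamma s)"
    using Gamma_conv_nn_integral_real[OF assms] by simp
qed

lemma gamma_moment:
  assumes a: "a > 0" and b: "b > 0"
  shows "has_bochner_integral lborel (\<lambda>x. gamma_density a b x * x ^ j) (pochhammer a j / b ^ j)"
proof -
  define C where "C = b / (Gamma a * b ^ j)"
  have G: "has_bochner_integral lborel (\<lambda>t. C * (indicator {0..} t * t powr (a + j - 1) / exp t)) (C * Gamma (a + j))"
    using Gamma_hbi[of "a + j"] a by (intro has_bochner_integral_mult_right) auto
  have eq: "(\<lambda>x. gamma_density a b (0 + (1/b) * x) * (0 + (1/b) * x) ^ j) =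
     (\<lambda>t. C * (indicator {0..} t * t powr (a + j - 1) / exp t))"
  proof
    fix x :: real
    show "gamma_density a b (0 + (1/b) * x) * (0 + (1/b) * x) ^ j = C * (indicator {0..} x * x powr (a + j - 1) / exp x)"
    proof (cases "x > 0")
      case True
      have "(x / b) powr (a - 1) = x powr (a - 1) / b powr (a - 1)"
        using True b by (simp add: powr_divide)
      moreover have "b powr a = b * b powr (a - 1)"
        using b by (simp add: powr_diff)
      moreover have "x powr (a + j - 1) = x powr (a - 1) * x ^ j"
        using True by (simp add: powr_add[symmetric] powr_realpow[symmetric] algebra_simps)
      moreover have "(x / b) ^ j = x ^ j / b ^ j" by (simp add: power_divide)
      ultimately show ?thesis using True b a
        by (simp add: gamma_density_def C_def exp_minus field_simps)
    next
      case False
      then have "\<not> 0 < x / b" using b by (simp add: not_less divide_nonpos_pos)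
      then show ?thesis using False by (auto simp: gamma_density_def indicator_def)
    qed
  qed
  have val: "C * Gamma (a + j) = (pochhammer a j / b ^ j) /\<^sub>R \<bar>1/b\<bar>"
  proof -
    have "pochhammer a j = Gamma (a + j) / Gamma a"
      using a by (subst pochhammer_Gamma) (auto elim!: nonpos_Ints_cases)
    then show ?thesis using a b by (simp add: C_def field_simps Gamma_real_pos)
  qed
  show ?thesis
    using G b by (subst lborel_has_bochner_integral_real_affine_iff[where c="1/b" and t=0]) (simp_all only: eq val, simp)
qed


lemma dist_hbi:
  assumes D: "distributed M lborel Y (\<lambda>x. ennreal (f x))" and f: "\<And>x. 0 \<le> f x"
    and g: "g \<in> borel_measurable borel"
    and H: "has_bochner_integral lborel (\<lambda>x. f x * g x) v"
  shows "integrable M (\<lambda>\<omega>. g (Y \<omega>)) \<and> integral\<^sup>L M (\<lambda>\<omega>. g (Y \<omega>)) = v"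
proof
  have g': "g \<in> borel_measurable lborel" using g by simp
  show "integrable M (\<lambda>\<omega>. g (Y \<omega>))"
    using distributed_integrable[OF D g'] f H by (auto simp: has_bochner_integral_iff)
  show "integral\<^sup>L M (\<lambda>\<omega>. g (Y \<omega>)) = v"
    using distributed_integral[OF D g'] f H by (auto simp: has_bochner_integral_iff)
qed

lemma normal_cmoment:
  assumes "s2 > 0"
  shows "has_bochner_integral lborel (\<lambda>x. normal_density \<mu> (sqrt s2) x * (x - \<mu>) ^ l) (cnorm s2 l)"
proof (cases "even l")
  case True
  then obtain k where k: "l = 2 * k" by blast
  show ?thesis using normal_moment_even[of "sqrt s2" \<mu> k] assms
    by (simp add: k cnorm_def)
next
  case False
  then obtain k where k: "l = 2 * k + 1" using oddE by blast
  show ?thesis using normal_moment_odd[of "sqrt s2" \<mu> k] assms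
    by (simp add: k cnorm_def)
qed

lemma crec_12: "crec m k \<Longrightarrow> m 1 = k 0 \<and> m 2 = (k 0)\<^sup>2 + k 1"
  unfolding crec_def
  using spec[of _ 0] spec[of _ 1]
  by (auto simp: numeral_2_eq_2 power2_eq_square)


lemma normal_moments:
  assumes P: "prob_space M" and s2: "s2 > 0"
    and D: "distributed M lborel Z (\<lambda>x. ennreal (normal_density \<mu> (sqrt s2) x))"
  shows "integrable M (\<lambda>\<omega>. Z \<omega> ^ j) \<and> integral\<^sup>L M (\<lambda>\<omega>. Z \<omega> ^ j) = bconv (\<lambda>i. \<mu> ^ i) (cnorm s2) j"
proof -
  have c: "integrable M (\<lambda>\<omega>. (Z \<omega> - \<mu>) ^ l) \<and> integral\<^sup>L M (\<lambda>\<omega>. (Z \<omega> - \<mu>) ^ l) = cnorm s2 l" for l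
    by (rule dist_hbi[OF D _ _ normal_cmoment[OF s2]]) auto
  have eq: "(\<lambda>\<omega>. Z \<omega> ^ j) = (\<lambda>\<omega>. \<Sum>i\<le>j. real (j choose i) * \<mu> ^ i * (Z \<omega> - \<mu>) ^ (j - i))"
  proof
    fix \<omega>
    have "Z \<omega> ^ j = (\<mu> + (Z \<omega> - \<mu>)) ^ j" by simp
    also have "\<dots> = (\<Sum>i\<le>j. real (j choose i) * \<mu> ^ i * (Z \<omega> - \<mu>) ^ (j - i))"
      by (rule binomial_ring)
    finally show "Z \<omega> ^ j = (\<Sum>i\<le>j. real (j choose i) * \<mu> ^ i * (Z \<omega> - \<mu>) ^ (j - i))" .
  qed
  show ?thesis unfolding eq using c
    by (simp add: bconv_def)
qed


lemma gamma_moments_M: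
  assumes D: "distributed M lborel Y (\<lambda>x. ennreal (gamma_density a b x))" and a: "a > 0" and b: "b > 0"
  shows "integrable M (\<lambda>\<omega>. Y \<omega> ^ j) \<and> integral\<^sup>L M (\<lambda>\<omega>. Y \<omega> ^ j) = pochhammer a j / b ^ j"
  by (rule dist_hbi[OF D _ _ gamma_moment[OF a b]]) (use a gamma_density_nonneg in auto)

lemma sum_moments:
  fixes m :: nat
  assumes P: "prob_space M"
    and ind: "prob_space.indep_vars M (\<lambda>_. borel) X {1..n}"
    and ab: "\<And>i. i \<in> {1..n} \<Longrightarrow> a i > 0 \<and> b i > 0"
    and D: "\<And>i. i \<in> {1..n} \<Longrightarrow> distributed M lborel (X i) (\<lambda>x. ennreal (gamma_density (a i) (b i) x))"
  shows "m \<le> n \<Longrightarrow> (\<forall>j. integrable M (\<lambda>\<omega>. (\<Sum>i\<in>{1..m}. X i \<omega>) ^ j)) \<and>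
     crec (\<lambda>j. integral\<^sup>L M (\<lambda>\<omega>. (\<Sum>i\<in>{1..m}. X i \<omega>) ^ j)) (\<lambda>k. \<Sum>i\<in>{1..m}. a i * fact k / b i ^ Suc k)"
proof (induction m)
  case 0
  interpret prob_space M by (rule P)
  have "crec (\<lambda>j. (0::real) ^ j) (\<lambda>i. if i = 0 then 0 else 0)" by (rule crec_const)
  then show ?case by (simp add: prob_space)
next
  case (Suc m)
  interpret prob_space M by (rule P)
  let ?T = "\<lambda>\<omega>. \<Sum>i\<in>{1..m}. X i \<omega>"
  let ?Y = "X (Suc m)"
  have IH: "(\<forall>j. integrable M (\<lambda>\<omega>. ?T \<omega> ^ j)) \<and>
     crec (\<lambda>j. integral\<^sup>L M (\<lambda>\<omega>. ?T \<omega> ^ j)) (\<lambda>k. \<Sum>i\<in>{1..m}. a i * fact k / b i ^ Suc k)"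
    using Suc by simp
  have mem: "Suc m \<in> {1..n}" using Suc by simp
  have Ym: "integrable M (\<lambda>\<omega>. ?Y \<omega> ^ j) \<and> integral\<^sup>L M (\<lambda>\<omega>. ?Y \<omega> ^ j) = pochhammer (a (Suc m)) j / b (Suc m) ^ j" for j
    using gamma_moments_M[OF D[OF mem]] ab[OF mem] by auto
  have indYT: "indep_var borel ?Y borel ?T"
    using indep_vars_sum[of "{1..m}" "Suc m" X] indep_vars_subset[OF ind, of "insert (Suc m) {1..m}"] Suc
    by auto
  have indp: "indep_var borel (\<lambda>\<omega>. ?Y \<omega> ^ i) borel (\<lambda>\<omega>. ?T \<omega> ^ l)" for i l
    using indep_var_compose[OF indYT, of "\<lambda>x. x ^ i" borel "\<lambda>x. x ^ l" borel] by (simp add: comp_def)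
  have prod: "integrable M (\<lambda>\<omega>. ?Y \<omega> ^ i * ?T \<omega> ^ l) \<and>
      integral\<^sup>L M (\<lambda>\<omega>. ?Y \<omega> ^ i * ?T \<omega> ^ l) = integral\<^sup>L M (\<lambda>\<omega>. ?Y \<omega> ^ i) * integral\<^sup>L M (\<lambda>\<omega>. ?T \<omega> ^ l)" for i l
    using indep_var_lebesgue_integral[OF indp[of i l]] indep_var_integrable[OF indp[of i l]] Ym[of i] IH by auto
  have eq: "(\<lambda>\<omega>. (\<Sum>i\<in>{1..Suc m}. X i \<omega>) ^ j) = (\<lambda>\<omega>. \<Sum>i\<le>j. real (j choose i) * (?Y \<omega> ^ i * ?T \<omega> ^ (j - i)))" for j
  proof
    fix \<omega>
    have "(\<Sum>i\<in>{1..Suc m}. X i \<omega>) ^ j = (?Y \<omega> + ?T \<omega>) ^ j" by (simp add: add.commute)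
    also have "\<dots> = (\<Sum>i\<le>j. real (j choose i) * (?Y \<omega> ^ i * ?T \<omega> ^ (j - i)))"
      by (subst binomial_ring) (simp add: mult.assoc)
    finally show "(\<Sum>i\<in>{1..Suc m}. X i \<omega>) ^ j = (\<Sum>i\<le>j. real (j choose i) * (?Y \<omega> ^ i * ?T \<omega> ^ (j - i)))" .
  qed
  have int: "integrable M (\<lambda>\<omega>. (\<Sum>i\<in>{1..Suc m}. X i \<omega>) ^ j)" for j
    unfolding eq using prod by auto
  have mom: "(\<lambda>j. integral\<^sup>L M (\<lambda>\<omega>. (\<Sum>i\<in>{1..Suc m}. X i \<omega>) ^ j)) =
      bconv (\<lambda>j. pochhammer (a (Suc m)) j / b (Suc m) ^ j) (\<lambda>j. integral\<^sup>L M (\<lambda>\<omega>. ?T \<omega> ^ j))"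
  proof
    fix j
    show "integral\<^sup>L M (\<lambda>\<omega>. (\<Sum>i\<in>{1..Suc m}. X i \<omega>) ^ j) =
      bconv (\<lambda>j. pochhammer (a (Suc m)) j / b (Suc m) ^ j) (\<lambda>j. integral\<^sup>L M (\<lambda>\<omega>. ?T \<omega> ^ j)) j"
      unfolding eq using prod Ym by (simp add: bconv_def mult.assoc)
  qed
  have cr: "crec (bconv (\<lambda>j. pochhammer (a (Suc m)) j / b (Suc m) ^ j) (\<lambda>j. integral\<^sup>L M (\<lambda>\<omega>. ?T \<omega> ^ j)))
      (\<lambda>k. a (Suc m) * fact k / b (Suc m) ^ Suc k + (\<Sum>i\<in>{1..m}. a i * fact k / b i ^ Suc k))"
    using crec_bconv[OF crec_gamma IH[THEN conjunct2]] ab[OF mem] by auto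
  have keq: "(\<lambda>k. a (Suc m) * fact k / b (Suc m) ^ Suc k + (\<Sum>i\<in>{1..m}. a i * fact k / b i ^ Suc k)) =
      (\<lambda>k. \<Sum>i\<in>{1..Suc m}. a i * fact k / b i ^ Suc k)"
    by (simp add: add.commute)
  show ?case using int cr unfolding mom keq by simp
qed

theorem corollary1:
  fixes M :: "'m measure" and n :: nat
    and X :: "nat \<Rightarrow> 'm \<Rightarrow> real" and Z G :: "'m \<Rightarrow> real"
    and a b :: "nat \<Rightarrow> real" and \<alpha> \<beta> :: real
  assumes "prob_space M"
    and "prob_space.indep_vars M (\<lambda>_. borel) X {1..n}"
    and "\<And>i. i \<in> {1..n} \<Longrightarrow> a i > 0 \<and> b i > 0"
    and "\<And>i. i \<in> {1..n} \<Longrightarrow> distributed M lborel (X i) (gamma_density (a i) (b i))"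
  defines "S \<equiv> (\<lambda>\<omega>. \<Sum>i\<in>{1..n}. X i \<omega>)"
  defines "\<mu> \<equiv> prob_space.expectation M S"
    and "\<sigma>2 \<equiv> prob_space.variance M S"
  assumes "distributed M lborel Z (normal_density \<mu> (sqrt \<sigma>2))"
    and "\<alpha> > 0" and "\<beta> > 0"
    and "distributed M lborel G (gamma_density \<alpha> \<beta>)"
    and "\<alpha> / \<beta> = \<mu>" and "\<alpha> / \<beta>\<^sup>2 = \<sigma>2"
  shows "(\<forall>j\<in>{1, 2::nat}.
           prob_space.expectation M (\<lambda>\<omega>. Z \<omega> ^ j) = prob_space.expectation M (\<lambda>\<omega>. G \<omega> ^ j) \<and>
           prob_space.expectation M (\<lambda>\<omega>. G \<omega> ^ j) = prob_space.expectation M (\<lambda>\<omega>. S \<omega> ^ j)) \<and>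
         (\<forall>j::nat. j \<ge> 3 \<longrightarrow>
           prob_space.expectation M (\<lambda>\<omega>. Z \<omega> ^ j) < prob_space.expectation M (\<lambda>\<omega>. G \<omega> ^ j) \<and>
           prob_space.expectation M (\<lambda>\<omega>. G \<omega> ^ j) \<le> prob_space.expectation M (\<lambda>\<omega>. S \<omega> ^ j))"
proof -
  interpret prob_space M by (rule assms(1))
  define kS where "kS = (\<lambda>k. \<Sum>i\<in>{1..n}. a i * fact k / b i ^ Suc k)"
  define mS where "mS = (\<lambda>j. expectation (\<lambda>\<omega>. S \<omega> ^ j))"
  have SM: "(\<forall>j. integrable M (\<lambda>\<omega>. S \<omega> ^ j)) \<and> crec mS kS"
    using sum_moments[OF assms(1-4), of n] unfolding S_def mS_def kS_def by simp
  then have crS: "crec mS kS" and intS: "\<And>j. integrable M (\<lambda>\<omega>. S \<omega> ^ j)" by auto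
  have intS1: "integrable M S" using intS[of 1] by simp
  have intS2: "integrable M (\<lambda>\<omega>. (S \<omega>)\<^sup>2)" using intS[of 2] by simp
  have S12: "mS 1 = kS 0 \<and> mS 2 = (kS 0)\<^sup>2 + kS 1" by (rule crec_12[OF crS])
  have mu: "\<mu> = kS 0" using S12 unfolding \<mu>_def mS_def by simp
  have sig: "\<sigma>2 = kS 1"
    using S12 variance_eq[OF intS1 intS2] unfolding \<sigma>2_def mS_def \<mu>_def by simp
  have A: "\<alpha> / \<beta> = (\<Sum>i\<in>{1..n}. a i / b i)" using assms(12) mu by (simp add: kS_def)
  have B: "\<alpha> / \<beta>\<^sup>2 = (\<Sum>i\<in>{1..n}. a i / (b i)\<^sup>2)" using assms(13) sig by (simp add: kS_def power2_eq_square)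
  have s2pos: "\<sigma>2 > 0" using assms(9,10,13) by auto
  have mupos: "\<mu> > 0" using assms(9,10,12) by auto
  define kG where "kG = (\<lambda>k. \<alpha> * fact k / \<beta> ^ Suc k)"
  define mG where "mG = (\<lambda>j. pochhammer \<alpha> j / \<beta> ^ j)"
  have crG: "crec mG kG" unfolding mG_def kG_def by (rule crec_gamma) (use assms(10) in simp)
  have GM: "expectation (\<lambda>\<omega>. G \<omega> ^ j) = mG j" for j
    using gamma_moments_M[OF assms(11,9,10)] by (simp add: mG_def)
  define kZ where "kZ = (\<lambda>i::nat. (if i = 0 then \<mu> else 0) + (if i = 1 then \<sigma>2 else 0))"
  define mZ where "mZ = bconv (\<lambda>i. \<mu> ^ i) (cnorm \<sigma>2)"
  have crZ: "crec mZ kZ" unfolding mZ_def kZ_def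
    by (rule crec_bconv[OF crec_const crec_cnorm[OF s2pos]])
  have ZM: "expectation (\<lambda>\<omega>. Z \<omega> ^ j) = mZ j" for j
    using normal_moments[OF assms(1) s2pos assms(8)] by (simp add: mZ_def)
  have kZ0: "0 \<le> kZ i" for i using mupos s2pos by (simp add: kZ_def)
  have kG0: "0 \<le> kG i" for i using assms(9,10) by (simp add: kG_def)
  have kZG: "kZ i \<le> kG i" for i
  proof -
    have "i = 0 \<or> i = 1 \<or> i \<ge> 2" by auto
    then show ?thesis
      using assms(12,13) kG0[of i] by (auto simp: kZ_def kG_def power2_eq_square)
  qed
  have kGS: "kG i \<le> kS i" for i
    unfolding kG_def kS_def
    by (rule cum_ineq[OF _ _ assms(9,10) A B]) (use assms(3) in auto)
  have kZG2: "kZ 2 < kG 2" using assms(9,10) by (simp add: kZ_def kG_def)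
  have kG0p: "kG 0 > 0" using assms(9,10) by (simp add: kG_def)
  have Z12: "mZ 1 = kZ 0 \<and> mZ 2 = (kZ 0)\<^sup>2 + kZ 1" by (rule crec_12[OF crZ])
  have G12: "mG 1 = kG 0 \<and> mG 2 = (kG 0)\<^sup>2 + kG 1" by (rule crec_12[OF crG])
  have k0: "kZ 0 = kG 0" "kG 0 = kS 0" using assms(12) mu by (simp_all add: kZ_def kG_def)
  have k1: "kZ 1 = kG 1" "kG 1 = kS 1" using assms(13) sig by (simp_all add: kZ_def kG_def power2_eq_square)
  have part1: "\<forall>j\<in>{1, 2::nat}. mZ j = mG j \<and> mG j = mS j"
    using Z12 G12 S12 k0 k1 by auto
  have part2: "\<forall>j::nat. j \<ge> 3 \<longrightarrow> mZ j < mG j \<and> mG j \<le> mS j"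
    using crec_strict[OF crZ crG kZ0 kZG kZG2 kG0p] crec_mono[OF crG crS kG0 kGS] by auto
  show ?thesis using part1 part2 unfolding ZM GM mS_def by simp
qed

end
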